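(* Let $\mathcal{N}$ be a one-counter net. A strategy $\sigma$ of Eve in the letter game on $\mathcal{N}$ is winning for Eve if and only if every transition that $\sigma$ takes (in plays consistent with $\sigma$) is residual.
   Context: A one-counter net (OCN) is $\mathcal{N}=(Q,\Sigma,\Delta,q_0,F)$ with $Q$ finite, $\Sigma$ finite, $q_0\in Q$, $F\subseteq Q$, $\Delta\subseteq Q\times\Sigma\times\{-1,0,1\}\times Q$; configurations $(q,n)\in Q\times\mathbb{N}$, step $(q,n)\xrightarrow{a,d}(p,n+d)$ if $(q,a,d,p)\in\Delta$ and $n+d\ge0$; runs start at $(q_0,0)$ and are accepting if the last state is in $F$; $\mathcal{L}(\mathcal{N})$ is the set of words with an accepting run, and $\mathcal{L}(q,k)$ denotes the set of words accepted when runs start at $(q,k)$ instead. A step $(q,k)\xrightarrow{a,d}(q',k')$ is residual if $\mathcal{L}(q',k')=a^{-1}\mathcal{L}(q,k)=\{w: aw\in\mathcal{L}(q,k)\}$. Letter game: positions $(c,w)$, start $((q_0,0),\varepsilon)$; each round Adam picks $a\in\Sigma$, Eve picks a step $c\xrightarrow{a,d}c'$; if Eve has none and $wa$ is a prefix of a word of $\mathcal{L}(\mathcal{N})$ she loses; if $wa\in\mathcal{L}(\mathcal{N})$ but the state of $c'$ is not in $F$, Adam wins; otherwise continue from $(c',wa)$; Eve wins infinite plays. *)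

theory Defs
  imports Main
begin

record ('q, 'a) ocn =
  states :: "'q set"
  alph   :: "'a set"
  trans  :: "('q \<times> 'a \<times> int \<times> 'q) set"
  init   :: 'q
  final  :: "'q set"

definition wf_ocn :: "('q, 'a) ocn \<Rightarrow> bool" where
  "wf_ocn N \<longleftrightarrow> finite (states N) \<and> finite (alph N) \<and>
     trans N \<subseteq> states N \<times> alph N \<times> {-1, 0, 1} \<times> states N \<and>
     init N \<in> states N \<and> final N \<subseteq> states N"

definition step :: "('q, 'a) ocn \<Rightarrow> 'q \<times> nat \<Rightarrow> 'a \<Rightarrow> int \<Rightarrow> 'q \<times> nat \<Rightarrow> bool" where
  "step N c a d c' \<longleftrightarrow> (fst c, a, d, fst c') \<in> trans N \<and>
      int (snd c) + d \<ge> 0 \<and> int (snd c') = int (snd c) + d"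

fun acc :: "('q, 'a) ocn \<Rightarrow> 'q \<times> nat \<Rightarrow> 'a list \<Rightarrow> bool" where
  "acc N c [] \<longleftrightarrow> fst c \<in> final N"
| "acc N c (a # w) \<longleftrightarrow> (\<exists>d c'. step N c a d c' \<and> acc N c' w)"

definition lang_from :: "('q, 'a) ocn \<Rightarrow> 'q \<times> nat \<Rightarrow> 'a list set" where
  "lang_from N c = {w. acc N c w}"

definition lang :: "('q, 'a) ocn \<Rightarrow> 'a list set" where
  "lang N = lang_from N (init N, 0)"

definition residual :: "('q, 'a) ocn \<Rightarrow> 'q \<times> nat \<Rightarrow> 'a \<Rightarrow> 'q \<times> nat \<Rightarrow> bool" where
  "residual N c a c' \<longleftrightarrow> lang_from N c' = {w. a # w \<in> lang_from N c}"

text \<open>A strategy of Eve maps the word played so far by Adam (including the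
  letter just chosen) to a transition of the net.  The play induced by a strategy
  on Adam's word: play N \<sigma> w = Some c if Eve's choices along w are legal steps and
  lead to configuration c; None if at some point the chosen transition cannot be
  taken (Eve is stuck).\<close>
type_synonym ('q, 'a) strategy = "'a list \<Rightarrow> 'q \<times> 'a \<times> int \<times> 'q"

fun prun :: "('q, 'a) ocn \<Rightarrow> ('q, 'a) strategy \<Rightarrow> 'a list \<Rightarrow> 'q \<times> nat \<Rightarrow> 'a list
             \<Rightarrow> ('q \<times> nat) option" where
  "prun N \<sigma> u c [] = Some c"
| "prun N \<sigma> u c (a # w) =
     (case \<sigma> (u @ [a]) of (q, b, d, p) \<Rightarrow>
        if q = fst c \<and> b = a \<and> step N c a d (p, nat (int (snd c) + d))
        then prun N \<sigma> (u @ [a]) (p, nat (int (snd c) + d)) w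
        else None)"

definition play :: "('q, 'a) ocn \<Rightarrow> ('q, 'a) strategy \<Rightarrow> 'a list \<Rightarrow> ('q \<times> nat) option" where
  "play N \<sigma> w = prun N \<sigma> [] (init N, 0) w"

text \<open>Eve must pick a step whenever one exists: a (legal) strategy never gets
  stuck when a step on the chosen letter is available.\<close>
definition eve_strategy :: "('q, 'a) ocn \<Rightarrow> ('q, 'a) strategy \<Rightarrow> bool" where
  "eve_strategy N \<sigma> \<longleftrightarrow>
     (\<forall>w \<in> lists (alph N). \<forall>a \<in> alph N. \<forall>c.
        play N \<sigma> w = Some c \<and> (\<exists>d c'. step N c a d c') \<longrightarrow> play N \<sigma> (w @ [a]) \<noteq> None)"

text \<open>Winning for Eve: in no play consistent with \<sigma> does Eve lose, i.e. she is never
  without a step on a prefix of a word of L(N), and whenever the word read so far is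
  in L(N) the reached state is accepting.  (If Eve has no step and the word is not a
  prefix of a word of L(N), the play ends without Eve losing.)\<close>
definition winning :: "('q, 'a) ocn \<Rightarrow> ('q, 'a) strategy \<Rightarrow> bool" where
  "winning N \<sigma> \<longleftrightarrow>
     (\<forall>w \<in> lists (alph N). \<forall>a \<in> alph N. \<forall>c. play N \<sigma> w = Some c \<longrightarrow>
        ((\<not> (\<exists>d c'. step N c a d c') \<longrightarrow> \<not> (\<exists>v. w @ [a] @ v \<in> lang N)) \<and>
         (\<forall>c'. play N \<sigma> (w @ [a]) = Some c' \<and> w @ [a] \<in> lang N \<longrightarrow> fst c' \<in> final N)))"

definition takes_only_residual :: "('q, 'a) ocn \<Rightarrow> ('q, 'a) strategy \<Rightarrow> bool" where
  "takes_only_residual N \<sigma> \<longleftrightarrow>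
     (\<forall>w \<in> lists (alph N). \<forall>a \<in> alph N. \<forall>c c'.
        play N \<sigma> w = Some c \<and> play N \<sigma> (w @ [a]) = Some c' \<longrightarrow> residual N c a c')"

end

theory Submission
  imports Defs
begin

lemma prun_append:
  "prun N \<sigma> u c (w @ v) = (case prun N \<sigma> u c w of None \<Rightarrow> None
      | Some c0 \<Rightarrow> prun N \<sigma> (u @ w) c0 v)"
  by (induction w arbitrary: u c) (auto split: prod.splits option.splits)

lemma prun_single:
  assumes "prun N \<sigma> u c [a] = Some c'"
  shows "\<exists>d. step N c a d c'"
  using assms by (auto split: prod.splits if_splits)

lemma prun_sound:
  "prun N \<sigma> u c w = Some c' \<Longrightarrow> acc N c' v \<Longrightarrow> acc N c (w @ v)"
proof (induction w arbitrary: u c)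
  case Nil then show ?case by simp
next
  case (Cons a w)
  obtain q b d p where s: "\<sigma> (u @ [a]) = (q, b, d, p)" by (cases "\<sigma> (u @ [a])") auto
  with Cons.prems have st: "step N c a d (p, nat (int (snd c) + d))"
    and r: "prun N \<sigma> (u @ [a]) (p, nat (int (snd c) + d)) w = Some c'"
    by (auto split: if_splits)
  from Cons.IH[OF r Cons.prems(2)] st show ?case by auto
qed

lemma acc_alph:
  assumes "wf_ocn N" "acc N c w" shows "set w \<subseteq> alph N"
  using assms(2)
proof (induction w arbitrary: c)
  case Nil then show ?case by simp
next
  case (Cons a w)
  then obtain d c' where "step N c a d c'" "acc N c' w" by auto
  then show ?case using Cons.IH assms(1) unfolding wf_ocn_def step_def by auto
qed

lemma acc_ConsI: "step N c a d c' \<Longrightarrow> acc N c' v \<Longrightarrow> acc N c (a # v)"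
  by (metis acc.simps(2))

lemma play_snoc:
  assumes "play N \<sigma> (w @ [a]) = Some c'"
  shows "\<exists>c. play N \<sigma> w = Some c \<and> (\<exists>d. step N c a d c')"
proof -
  from assms have "(case play N \<sigma> w of None \<Rightarrow> None
      | Some c0 \<Rightarrow> prun N \<sigma> w c0 [a]) = Some c'"
    unfolding play_def using prun_append[of N \<sigma> "[]" "(init N, 0)" w "[a]"] by (metis append_Nil)
  then obtain c where "play N \<sigma> w = Some c" "prun N \<sigma> w c [a] = Some c'"
    by (auto split: option.splits)
  then show ?thesis using prun_single[of N \<sigma> w c a c'] by blast
qed

lemma play_sound:
  "play N \<sigma> w = Some c \<Longrightarrow> acc N c v \<Longrightarrow> w @ v \<in> lang N"
  unfolding play_def lang_def lang_from_def using prun_sound by fastforce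

lemma completeness:
  assumes wf: "wf_ocn N" and es: "eve_strategy N \<sigma>" and win: "winning N \<sigma>"
  shows "w \<in> lists (alph N) \<Longrightarrow> play N \<sigma> w = Some c \<Longrightarrow> w @ v \<in> lang N \<Longrightarrow> acc N c v"
proof (induction v arbitrary: w c)
  case Nil
  show ?case
  proof (cases w rule: rev_cases)
    case Nil
    with Nil.prems show ?thesis
      by (simp add: play_def lang_def lang_from_def)
  next
    case (snoc w' a)
    from play_snoc[of N \<sigma> w' a c] Nil.prems snoc obtain c0 where c0: "play N \<sigma> w' = Some c0" by auto
    from Nil.prems snoc have "w' \<in> lists (alph N)" "a \<in> alph N" by auto
    with win c0 have "\<forall>c'. play N \<sigma> (w' @ [a]) = Some c' \<and> w' @ [a] \<in> lang N \<longrightarrow> fst c' \<in> final N"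
      unfolding winning_def by blast
    with Nil.prems snoc show ?thesis by auto
  qed
next
  case (Cons a v)
  from Cons.prems(3) have "acc N (init N, 0) (w @ a # v)"
    by (simp add: lang_def lang_from_def)
  from acc_alph[OF wf this] have a: "a \<in> alph N" by auto
  have ex: "\<exists>d c'. step N c a d c'"
  proof (rule ccontr)
    assume "\<not> ?thesis"
    with win Cons.prems a have "\<not> (\<exists>v'. w @ [a] @ v' \<in> lang N)" unfolding winning_def by blast
    with Cons.prems(3) show False by auto
  qed
  with es Cons.prems a have "play N \<sigma> (w @ [a]) \<noteq> None" unfolding eve_strategy_def by blast
  then obtain c' where c': "play N \<sigma> (w @ [a]) = Some c'" by auto
  from play_snoc[OF c'] Cons.prems(2) obtain d where st: "step N c a d c'" by auto
  have "acc N c' v" using Cons.IH[of "w @ [a]" c'] Cons.prems a c' by auto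
  with st show ?case by (rule acc_ConsI)
qed

lemma residual_inv:
  assumes tr: "takes_only_residual N \<sigma>"
  shows "w \<in> lists (alph N) \<Longrightarrow> play N \<sigma> w = Some c \<Longrightarrow> lang_from N c = {v. w @ v \<in> lang N}"
proof (induction w arbitrary: c rule: rev_induct)
  case Nil then show ?case by (simp add: play_def lang_def)
next
  case (snoc a w)
  from play_snoc[OF snoc.prems(2)] obtain c0 where c0: "play N \<sigma> w = Some c0" by auto
  from snoc.prems have "w \<in> lists (alph N)" "a \<in> alph N" by auto
  with tr c0 snoc.prems have "residual N c0 a c" unfolding takes_only_residual_def by blast
  with snoc.IH[OF _ c0] snoc.prems show ?case unfolding residual_def by auto
qed

theorem proposition1:
  fixes N :: "('q, 'a) ocn" and \<sigma> :: "('q, 'a) strategy"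
  assumes "wf_ocn N" and "eve_strategy N \<sigma>"
  shows "winning N \<sigma> \<longleftrightarrow> takes_only_residual N \<sigma>"
proof
  assume win: "winning N \<sigma>"
  show "takes_only_residual N \<sigma>"
    unfolding takes_only_residual_def
  proof (intro ballI allI impI)
    fix w a c c'
    assume w: "w \<in> lists (alph N)" and a: "a \<in> alph N"
      and p: "play N \<sigma> w = Some c \<and> play N \<sigma> (w @ [a]) = Some c'"
    from play_snoc[of N \<sigma> w a c'] p obtain d where st: "step N c a d c'" by auto
    show "residual N c a c'"
      unfolding residual_def lang_from_def
    proof (intro set_eqI iffI)
      fix v assume "v \<in> {v. acc N c' v}"
      with st show "v \<in> {v. a # v \<in> {w. acc N c w}}" using acc_ConsI by simp
    next
      fix v assume "v \<in> {v. a # v \<in> {w. acc N c w}}"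
      then have "w @ a # v \<in> lang N" using play_sound p by fastforce
      then show "v \<in> {v. acc N c' v}"
        using completeness[OF assms win, of "w @ [a]" c' v] w a p by auto
    qed
  qed
next
  assume tr: "takes_only_residual N \<sigma>"
  show "winning N \<sigma>"
    unfolding winning_def
  proof (intro ballI allI impI)
    fix w a c
    assume w: "w \<in> lists (alph N)" and a: "a \<in> alph N" and p: "play N \<sigma> w = Some c"
    have L: "lang_from N c = {v. w @ v \<in> lang N}" using residual_inv[OF tr w p] .
    show "(\<not> (\<exists>d c'. step N c a d c') \<longrightarrow> \<not> (\<exists>v. w @ [a] @ v \<in> lang N)) \<and>
         (\<forall>c'. play N \<sigma> (w @ [a]) = Some c' \<and> w @ [a] \<in> lang N \<longrightarrow> fst c' \<in> final N)"
    proof (rule conjI)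
    show "\<not> (\<exists>d c'. step N c a d c') \<longrightarrow> \<not> (\<exists>v. w @ [a] @ v \<in> lang N)"
    proof (intro impI notI)
      assume n: "\<not> (\<exists>d c'. step N c a d c')" and "\<exists>v. w @ [a] @ v \<in> lang N"
      then obtain v where "a # v \<in> lang_from N c" using L by auto
      then have "acc N c (a # v)" by (simp add: lang_from_def)
      with n show False by auto
    qed
  next
    show "\<forall>c'. play N \<sigma> (w @ [a]) = Some c' \<and> w @ [a] \<in> lang N \<longrightarrow> fst c' \<in> final N"
    proof (intro allI impI)
    fix c'
    assume q: "play N \<sigma> (w @ [a]) = Some c' \<and> w @ [a] \<in> lang N"
    have "lang_from N c' = {v. (w @ [a]) @ v \<in> lang N}"
      using residual_inv[OF tr _ conjunct1[OF q]] w a by auto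
    then have "[] \<in> lang_from N c'" using q by simp
    then have "acc N c' []" by (simp add: lang_from_def)
    then show "fst c' \<in> final N" by simp
  qed
  qed
  qed
qed

end
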